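(* Let $I$ and $J$ be finite sets, let $g\in\mathbb{R}^J$, and for each $i\in I$ let $x^0_i\in\mathbb{R}^J$ and let $u_i:\mathbb{R}^J\to\mathbb{R}\cup\{-\infty\}$ be upper semicontinuous and concave with $u_i(x_i+rg)>u_i(x_i)$ for all $x_i\in\mathrm{dom}\,u_i$ and all $r>0$. Assume moreover that whenever $x\in\mathbb{R}^{I\times J}$ satisfies $u_i^\infty(x_i)\ge 0$ for all $i\in I$ and $\sum_{i\in I}x_i=0$, then $x=0$. Define $D_i(x_i):=\sup\{r\in\mathbb{R}\mid u_i(x^0_i+x_i-rg)\ge u_i(x^0_i)\}$. Then the problem \[ \text{maximize } \sum_{i\in I}D_i(x_i)\ \text{ over } x\in\mathbb{R}^{I\times J}\ \text{ subject to } \sum_{i\in I}x_i=0 \] admits an optimal solution.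
   Context: $\mathrm{dom}\,u_i=\{x\in\mathbb{R}^J\mid u_i(x)>-\infty\}$. The recession function of the upper semicontinuous concave function $u_i$ is $u_i^\infty(x_i):=\inf_{\alpha>0}\frac{u_i(\bar x_i+\alpha x_i)-u_i(\bar x_i)}{\alpha}$ for any $\bar x_i\in\mathrm{dom}\,u_i$ (independent of the choice of $\bar x_i$). $x^0_i$ is agent $i$'s endowment, $g$ the numeraire portfolio, and $D_i$ agent $i$'s indifference-price function; the optimization problem is the (double auction) market clearing problem. *)

theory Defs
  imports "HOL-Analysis.Analysis"
begin

definition edom :: "('a \<Rightarrow> ereal) \<Rightarrow> 'a set" where
  "edom u = {x. u x > -\<infinity>}"

definition usc :: "('a::topological_space \<Rightarrow> ereal) \<Rightarrow> bool" where
  "usc u \<longleftrightarrow> (\<forall>c::ereal. closed {x. c \<le> u x})"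

definition concave_ereal :: "('a::real_vector \<Rightarrow> ereal) \<Rightarrow> bool" where
  "concave_ereal u \<longleftrightarrow> convex {(x, r::real). ereal r \<le> u x}"

definition recession :: "('a::real_vector \<Rightarrow> ereal) \<Rightarrow> 'a \<Rightarrow> ereal" where
  "recession u x = (let xb = (SOME xb. xb \<in> edom u) in
     (INF \<alpha>\<in>{0<..}. (u (xb + \<alpha> *\<^sub>R x) - u xb) / ereal \<alpha>))"

definition indiff_price :: "('a::real_vector \<Rightarrow> ereal) \<Rightarrow> 'a \<Rightarrow> 'a \<Rightarrow> 'a \<Rightarrow> ereal" where
  "indiff_price u x0 g x = (SUP r\<in>{r::real. u (x0 + x - r *\<^sub>R g) \<ge> u x0}. ereal r)"

end

theory Submission
  imports Defs
begin

lemma hypo_comb: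
  fixes u :: "'a::real_vector \<Rightarrow> ereal"
  assumes cc: "concave_ereal u" and "ereal a \<le> u x" and "ereal b \<le> u y"
    and "0 \<le> m" and "m \<le> 1"
  shows "ereal ((1-m)*a + m*b) \<le> u ((1-m) *\<^sub>R x + m *\<^sub>R y)"
proof -
  have cv: "convex {(x, r::real). ereal r \<le> u x}" using cc unfolding concave_ereal_def .
  have "(1-m) *\<^sub>R (x,a) + m *\<^sub>R (y,b) \<in> {(x, r::real). ereal r \<le> u x}"
    by (rule convexD[OF cv]) (use assms in auto)
  then show ?thesis by (simp add: algebra_simps)
qed

lemma rec_nonneg:
  fixes u :: "'a::real_normed_vector \<Rightarrow> ereal"
  assumes np: "\<And>y. u y \<noteq> \<infinity>" and us: "usc u" and cc: "concave_ereal u"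
    and x0: "x0 \<in> edom u" and dir: "\<And>t. t > 0 \<Longrightarrow> u (x0 + t *\<^sub>R v) \<ge> u x0"
  shows "recession u v \<ge> 0"
proof -
  define xb where "xb = (SOME xb. xb \<in> edom u)"
  have xb: "xb \<in> edom u" unfolding xb_def using x0 by (rule someI)
  obtain a where a: "u xb = ereal a" using xb np[of xb] unfolding edom_def
    by (cases "u xb") auto
  obtain b where b: "u x0 = ereal b" using x0 np[of x0] unfolding edom_def
    by (cases "u x0") auto
  have key: "ereal a \<le> u (xb + al *\<^sub>R v)" if al: "al > 0" for al
  proof (rule ereal_le_epsilon2)
    fix e :: real assume e: "0 < e"
    define k where "k = min (1/2) (e / (\<bar>a-b\<bar>+1))"
    have k0: "0 < k" using e unfolding k_def by auto
    have k1: "k \<le> 1/2" unfolding k_def by (rule min.cobounded1)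
    have kab: "k * \<bar>a-b\<bar> \<le> e"
    proof -
      have "k * \<bar>a-b\<bar> \<le> (e / (\<bar>a-b\<bar>+1)) * \<bar>a-b\<bar>"
        by (rule mult_right_mono) (auto simp: k_def)
      also have "\<dots> \<le> e" using e by (simp add: field_simps)
      finally show ?thesis .
    qed
    define lam where "lam n = k / real (Suc n)" for n
    have lam0: "0 < lam n" for n using k0 by (simp add: lam_def)
    have lam1: "lam n \<le> k" for n using k0 by (simp add: lam_def field_simps)
    define p where "p n = (1 - lam n) *\<^sub>R xb + lam n *\<^sub>R (x0 + (al / lam n) *\<^sub>R v)" for n
    have pin: "p n \<in> {y. ereal (a - e) \<le> u y}" for n
    proof -
      have "ereal b \<le> u (x0 + (al / lam n) *\<^sub>R v)"
        using dir[of "al / lam n"] al lam0[of n] b by auto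
      from hypo_comb[OF cc _ this, of a xb "lam n"] a lam0[of n] lam1[of n] k1
      have "ereal ((1 - lam n) * a + lam n * b) \<le> u (p n)" unfolding p_def by auto
      moreover have "a - e \<le> (1 - lam n) * a + lam n * b"
      proof -
        have "lam n * \<bar>a-b\<bar> \<le> k * \<bar>a-b\<bar>" using lam1[of n] by (simp add: mult_right_mono)
        then have "lam n * (a - b) \<le> e" using kab
          by (smt (verit) lam0 abs_ge_self mult_left_mono)
        then show ?thesis by (simp add: algebra_simps)
      qed
      ultimately show ?thesis by (metis (mono_tags) ereal_less_eq(3) mem_Collect_eq order_trans)
    qed
    have peq: "p n = (xb + al *\<^sub>R v) + lam n *\<^sub>R (x0 - xb)" for n
      using lam0[of n] by (simp add: p_def algebra_simps)
    have "lam \<longlonglongrightarrow> 0"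
      unfolding lam_def using LIMSEQ_Suc[OF lim_const_over_n[of k]] by simp
    then have "p \<longlonglongrightarrow> (xb + al *\<^sub>R v) + 0 *\<^sub>R (x0 - xb)"
      unfolding peq by (intro tendsto_intros)
    then have lim: "p \<longlonglongrightarrow> xb + al *\<^sub>R v" by simp
    have cl: "closed {y. ereal (a - e) \<le> u y}" using us unfolding usc_def by auto
    have "xb + al *\<^sub>R v \<in> {y. ereal (a - e) \<le> u y}"
      by (rule Lim_in_closed_set[OF cl _ _ lim]) (use pin in auto)
    then have "ereal (a - e) \<le> u (xb + al *\<^sub>R v)" by simp
    then show "ereal a \<le> u (xb + al *\<^sub>R v) + ereal e"
      by (cases "u (xb + al *\<^sub>R v)") auto
  qed
  show ?thesis
    unfolding recession_def Let_def xb_def[symmetric]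
  proof (rule INF_greatest)
    fix al :: real assume "al \<in> {0<..}"
    then have al: "al > 0" by simp
    obtain c where c: "u (xb + al *\<^sub>R v) = ereal c" using key[OF al] np[of "xb + al *\<^sub>R v"] a
      by (cases "u (xb + al *\<^sub>R v)") auto
    have "a \<le> c" using key[OF al] c by simp
    then show "0 \<le> (u (xb + al *\<^sub>R v) - u xb) / ereal al"
      using al by (simp add: c a)
  qed
qed

lemma sum_minf_ereal:
  fixes f :: "'a \<Rightarrow> ereal"
  assumes "finite A" "\<And>i. i \<in> A \<Longrightarrow> f i \<noteq> \<infinity>" "j \<in> A" "f j = -\<infinity>"
  shows "sum f A = -\<infinity>"
proof -
  have "sum f A = f j + sum f (A - {j})" using assms by (simp add: sum.remove)
  moreover have "sum f (A - {j}) \<noteq> \<infinity>" using assms by (simp add: sum_Pinfty)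
  ultimately show ?thesis using assms(4) by (cases "sum f (A - {j})") auto
qed

theorem theorem4p3:
  fixes u :: "'i::finite \<Rightarrow> (real^'j::finite) \<Rightarrow> ereal"
    and x0 :: "'i \<Rightarrow> real^'j"
    and g :: "real^'j"
  assumes no_pinf: "\<And>i y. u i y \<noteq> \<infinity>"
    and usc: "\<And>i. usc (u i)"
    and concave: "\<And>i. concave_ereal (u i)"
    and mono_g: "\<And>i y r. y \<in> edom (u i) \<Longrightarrow> r > 0 \<Longrightarrow> u i (y + r *\<^sub>R g) > u i y"
    and recess: "\<And>x :: 'i \<Rightarrow> real^'j.
        (\<forall>i. recession (u i) (x i) \<ge> 0) \<Longrightarrow> (\<Sum>i\<in>UNIV. x i) = 0 \<Longrightarrow> x = (\<lambda>i. 0)"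
  shows "\<exists>x :: 'i \<Rightarrow> real^'j. (\<Sum>i\<in>UNIV. x i) = 0 \<and>
           (\<forall>y :: 'i \<Rightarrow> real^'j. (\<Sum>i\<in>UNIV. y i) = 0 \<longrightarrow>
              (\<Sum>i\<in>UNIV. indiff_price (u i) (x0 i) g (y i))
                \<le> (\<Sum>i\<in>UNIV. indiff_price (u i) (x0 i) g (x i)))"
proof -
  define D where "D i y = indiff_price (u i) (x0 i) g y" for i y
  have "\<exists>x :: 'i \<Rightarrow> real^'j. (\<Sum>i\<in>UNIV. x i) = 0 \<and>
           (\<forall>y :: 'i \<Rightarrow> real^'j. (\<Sum>i\<in>UNIV. y i) = 0 \<longrightarrow>
              (\<Sum>i\<in>UNIV. D i (y i)) \<le> (\<Sum>i\<in>UNIV. D i (x i)))"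
  proof (cases "\<exists>y :: 'i \<Rightarrow> real^'j. (\<Sum>i\<in>UNIV. y i) = 0 \<and> (\<Sum>i\<in>UNIV. D i (y i)) = \<infinity>")
    case True
    then obtain y :: "'i \<Rightarrow> real^'j" where "(\<Sum>i\<in>UNIV. y i) = 0" "(\<Sum>i\<in>UNIV. D i (y i)) = \<infinity>"
      by blast
    then show ?thesis by (intro exI[of _ y]) auto
  next
    case False
    note nf = False
    have x0dom: "x0 i \<in> edom (u i)" for i
    proof (rule ccontr)
      assume "x0 i \<notin> edom (u i)"
      then have m: "u i (x0 i) = -\<infinity>" unfolding edom_def by auto
      have "D i 0 = \<infinity>"
        unfolding D_def indiff_price_def m
      proof (rule ereal_top)
        fix B :: real
        show "ereal B \<le> (SUP r\<in>{r. - \<infinity> \<le> u i (x0 i + 0 - r *\<^sub>R g)}. ereal r)"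
          by (rule SUP_upper) auto
      qed
      then have "(\<Sum>i\<in>UNIV. D i ((\<lambda>i. 0) i)) = \<infinity>" by (auto simp: sum_Pinfty)
      then show False using nf by auto
    qed
    obtain i0 :: 'i where True by blast
    have gnz: "g \<noteq> 0"
      using mono_g[OF x0dom[of i0], of 1] by auto
    define C where "C i = {z. u i (x0 i) \<le> u i (x0 i + z)}" for i
    have C0: "0 \<in> C i" for i by (simp add: C_def)
    have Ccl: "closed (C i)" for i
    proof -
      have "C i = (\<lambda>z. x0 i + z) -` {y. u i (x0 i) \<le> u i y}" by (auto simp: C_def)
      moreover have "closed {y. u i (x0 i) \<le> u i y}" using usc[of i] unfolding usc_def by blast
      moreover have "\<And>z. isCont (\<lambda>z. x0 i + z) z" by (intro continuous_intros)
      ultimately show ?thesis using continuous_closed_vimage by metis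
    qed
    have Ccv: "convex (C i)" for i
    proof (rule convexI)
      fix a b :: "real^'j" and m1 m2 :: real
      assume ab: "a \<in> C i" "b \<in> C i" and m: "0 \<le> m1" "0 \<le> m2" "m1 + m2 = 1"
      obtain c where c: "u i (x0 i) = ereal c" using x0dom[of i] no_pinf[of i "x0 i"]
        unfolding edom_def by (cases "u i (x0 i)") auto
      have "ereal ((1-m2)*c + m2*c) \<le> u i ((1-m2) *\<^sub>R (x0 i + a) + m2 *\<^sub>R (x0 i + b))"
        by (rule hypo_comb[OF concave]) (use ab m c in \<open>auto simp: C_def\<close>)
      moreover have "(1-m2) *\<^sub>R (x0 i + a) + m2 *\<^sub>R (x0 i + b) = x0 i + (m1 *\<^sub>R a + m2 *\<^sub>R b)"
        using m by (simp add: algebra_simps flip: scaleR_add_left)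
      moreover have "(1-m2)*c + m2*c = c" by (simp add: algebra_simps)
      ultimately show "m1 *\<^sub>R a + m2 *\<^sub>R b \<in> C i" unfolding C_def using c by simp
    qed
    define K :: "(((real^'j)^'i) \<times> real) set" where
      "K = {p. (\<forall>i. fst p $ i \<in> C i) \<and> (\<Sum>i\<in>UNIV. fst p $ i) + snd p *\<^sub>R g = 0 \<and> snd p \<ge> 0}"
    have Kcl: "closed K"
    proof -
      have Keq: "K = (\<Inter>i. (\<lambda>p. fst p $ i) -` C i) \<inter> (\<lambda>p. (\<Sum>i\<in>UNIV. fst p $ i) + snd p *\<^sub>R g) -` {0}
                \<inter> snd -` {0..}"
        by (auto simp: K_def)
      have c1: "closed ((\<lambda>p::(((real^'j)^'i) \<times> real). fst p $ i) -` C i)" for i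
        by (rule continuous_closed_vimage[OF Ccl]) (intro continuous_intros)
      have c2: "closed ((\<lambda>p::(((real^'j)^'i) \<times> real). (\<Sum>i\<in>UNIV. fst p $ i) + snd p *\<^sub>R g) -` {0})"
        by (rule continuous_closed_vimage[OF closed_singleton]) (intro continuous_intros)
      have c3: "closed ((snd :: (((real^'j)^'i) \<times> real) \<Rightarrow> real) -` {0..})"
        by (rule continuous_closed_vimage[OF closed_atLeast]) (intro continuous_intros)
      show ?thesis unfolding Keq
        by (intro closed_Int closed_INT c1 c2 c3 ballI)
    qed
    have Kb: "bounded K"
    proof (rule ccontr)
      assume nb: "\<not> bounded K"
      have "\<exists>p\<in>K. real n + 1 \<le> norm p" for n :: nat
      proof -
        from nb have "\<not> (\<forall>x\<in>K. norm x \<le> real n + 1)" unfolding bounded_iff by blast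
        then show ?thesis by (auto simp: not_le intro: less_imp_le)
      qed
      then obtain f where f: "\<And>n. f n \<in> K" "\<And>n. real n + 1 \<le> norm (f n)" by metis
      have fpos: "norm (f n) > 0" for n using f(2)[of n] of_nat_0_le_iff[of n] by linarith
      have wK1: "fst (f n) $ i \<in> C i" for n i using f(1)[of n] by (auto simp: K_def)
      have wK2: "(\<Sum>i\<in>UNIV. fst (f n) $ i) + snd (f n) *\<^sub>R g = 0" for n using f(1)[of n] by (auto simp: K_def)
      have wK3: "snd (f n) \<ge> 0" for n using f(1)[of n] by (auto simp: K_def)
      define w where "w n = (1 / norm (f n)) *\<^sub>R f n" for n
      have wS: "w n \<in> sphere 0 1" for n using fpos[of n] by (simp add: w_def)
      have w_eq1: "fst (w n) = (1 / norm (f n)) *\<^sub>R fst (f n)" for n by (simp add: w_def)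
      have w_eq2: "snd (w n) = (1 / norm (f n)) * snd (f n)" for n by (simp add: w_def)
      obtain l r where l: "l \<in> sphere 0 1" and r: "strict_mono r" and lim: "(w \<circ> r) \<longlonglongrightarrow> l"
        using seq_compactE[OF compact_imp_seq_compact[OF compact_sphere], of w 0 1] wS by metis
      define d where "d = fst l"
      define sg where "sg = snd l"
      have lim_fst: "(\<lambda>n. fst (w (r n))) \<longlonglongrightarrow> d"
        using tendsto_fst[OF lim] by (simp add: d_def o_def)
      have lim_snd: "(\<lambda>n. snd (w (r n))) \<longlonglongrightarrow> sg"
        using tendsto_snd[OF lim] by (simp add: sg_def o_def)
      have sg0: "sg \<ge> 0"
        by (rule LIMSEQ_le_const[OF lim_snd]) (use wK3 fpos in \<open>auto simp: w_eq2\<close>)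
      have hw: "(\<Sum>i\<in>UNIV. fst (w n) $ i) + snd (w n) *\<^sub>R g = 0" for n
      proof -
        have "(\<Sum>i\<in>UNIV. fst (w n) $ i) + snd (w n) *\<^sub>R g
            = (1 / norm (f n)) *\<^sub>R ((\<Sum>i\<in>UNIV. fst (f n) $ i) + snd (f n) *\<^sub>R g)"
          by (simp add: w_eq1 w_eq2 scaleR_add_right scaleR_sum_right)
        then show ?thesis using wK2[of n] by simp
      qed
      have sumd: "(\<Sum>i\<in>UNIV. d $ i) + sg *\<^sub>R g = 0"
      proof -
        have "(\<lambda>n. (\<Sum>i\<in>UNIV. fst (w (r n)) $ i) + snd (w (r n)) *\<^sub>R g) \<longlonglongrightarrow> (\<Sum>i\<in>UNIV. d $ i) + sg *\<^sub>R g"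
          by (intro tendsto_intros lim_fst lim_snd)
        moreover have "(\<lambda>n. (\<Sum>i\<in>UNIV. fst (w (r n)) $ i) + snd (w (r n)) *\<^sub>R g) \<longlonglongrightarrow> 0"
          by (simp add: hw)
        ultimately show ?thesis by (rule LIMSEQ_unique)
      qed
      have dir: "t *\<^sub>R (d $ i) \<in> C i" if t: "t > 0" for t i
      proof -
        have limq: "(\<lambda>n. t *\<^sub>R (fst (w (r n)) $ i)) \<longlonglongrightarrow> t *\<^sub>R (d $ i)"
          by (intro tendsto_intros lim_fst)
        obtain N :: nat where N: "t \<le> real N" using real_arch_simple by blast
        have ev: "eventually (\<lambda>n. t *\<^sub>R (fst (w (r n)) $ i) \<in> C i) sequentially"
          unfolding eventually_sequentially
        proof (intro exI allI impI)
          fix n assume "N \<le> n"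
          then have "real N \<le> real (r n)" using seq_suble[OF r, of n] by simp
          then have tle: "t \<le> norm (f (r n))" using f(2)[of "r n"] N by linarith
          have pos: "norm (f (r n)) > 0" using fpos .
          define mu where "mu = t / norm (f (r n))"
          have mu: "0 \<le> mu" "mu \<le> 1" using tle pos t by (auto simp: mu_def field_simps)
          have "(1 - mu) *\<^sub>R 0 + mu *\<^sub>R (fst (f (r n)) $ i) \<in> C i"
            by (rule convexD[OF Ccv C0 wK1]) (use mu in auto)
          moreover have "t *\<^sub>R (fst (w (r n)) $ i) = (1 - mu) *\<^sub>R 0 + mu *\<^sub>R (fst (f (r n)) $ i)"
            by (simp add: w_eq1 mu_def)
          ultimately show "t *\<^sub>R (fst (w (r n)) $ i) \<in> C i" by simp
        qed
        show ?thesis by (rule Lim_in_closed_set[OF Ccl ev _ limq]) simp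
      qed
      define d' where "d' i = d $ i + (if i = i0 then sg else 0) *\<^sub>R g" for i
      have rec': "recession (u i) (d' i) \<ge> 0" for i
      proof (rule rec_nonneg[OF no_pinf usc concave x0dom])
        fix t :: real assume t: "t > 0"
        have a1: "u i (x0 i) \<le> u i (x0 i + t *\<^sub>R d $ i)" using dir[OF t, of i] by (simp add: C_def)
        then have dom: "x0 i + t *\<^sub>R d $ i \<in> edom (u i)" using x0dom[of i]
          by (auto simp: edom_def intro: order.strict_trans2)
        have eq: "x0 i + t *\<^sub>R d' i = (x0 i + t *\<^sub>R d $ i) + (t * (if i = i0 then sg else 0)) *\<^sub>R g"
          by (simp add: d'_def algebra_simps)
        have "u i (x0 i + t *\<^sub>R d $ i) \<le> u i (x0 i + t *\<^sub>R d' i)"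
        proof (cases "t * (if i = i0 then sg else 0) > 0")
          case True then show ?thesis unfolding eq using mono_g[OF dom True] by simp
        next
          case False then have z: "t * (if i = i0 then sg else 0) = 0" using t sg0
            by (cases "i = i0") (auto simp: zero_less_mult_iff)
          show ?thesis unfolding eq z by simp
        qed
        then show "u i (x0 i) \<le> u i (x0 i + t *\<^sub>R d' i)" using a1 by simp
      qed
      have sumd': "(\<Sum>i\<in>UNIV. d' i) = 0"
      proof -
        have "(\<Sum>i\<in>UNIV. d' i) = (\<Sum>i\<in>UNIV. d $ i) + (\<Sum>i\<in>UNIV. (if i = i0 then sg else 0) *\<^sub>R g)"
          by (simp add: d'_def sum.distrib)
        also have "(\<Sum>i\<in>UNIV. (if i = i0 then sg else 0) *\<^sub>R g) = sg *\<^sub>R g"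
          by (simp add: if_distrib[of "\<lambda>a. a *\<^sub>R g"] cong: if_cong)
        finally show ?thesis using sumd by simp
      qed
      have d'0: "d' = (\<lambda>i. 0)" by (rule recess) (use rec' sumd' in auto)
      have dval: "d $ i = - ((if i = i0 then sg else 0) *\<^sub>R g)" for i
        using fun_cong[OF d'0, of i] by (simp add: d'_def eq_neg_iff_add_eq_0)
      show False
      proof (cases "sg = 0")
        case True
        then have "d = 0" using dval by (simp add: vec_eq_iff)
        then have "l = 0" using True by (simp add: d_def sg_def prod_eq_iff)
        then show False using l by simp
      next
        case False then have sgp: "sg > 0" using sg0 by simp
        have "1 *\<^sub>R (d $ i0) \<in> C i0" using dir[of 1 i0] by simp
        then have a: "u i0 (x0 i0) \<le> u i0 (x0 i0 - sg *\<^sub>R g)" using dval[of i0] by (simp add: C_def)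
        then have dom: "x0 i0 - sg *\<^sub>R g \<in> edom (u i0)" using x0dom[of i0]
          by (auto simp: edom_def intro: order.strict_trans2)
        have "u i0 (x0 i0 - sg *\<^sub>R g) < u i0 (x0 i0 - sg *\<^sub>R g + sg *\<^sub>R g)" by (rule mono_g[OF dom sgp])
        then show False using a by simp
      qed
    qed
    have "compact K" using Kb Kcl by (simp add: compact_eq_bounded_closed)
    moreover have "(0, 0) \<in> K" by (auto simp: K_def C0)
    ultimately obtain pm where pm: "pm \<in> K" "\<And>p. p \<in> K \<Longrightarrow> snd p \<le> snd pm"
      using continuous_attains_sup[of K snd, OF _ _ continuous_on_snd[OF continuous_on_id]] by blast
    define zs where "zs = fst pm"
    define ss where "ss = snd pm"
    have zsC: "zs $ i \<in> C i" for i using pm(1) by (auto simp: K_def zs_def)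
    have zsum: "(\<Sum>i\<in>UNIV. zs $ i) + ss *\<^sub>R g = 0" and ss0: "ss \<ge> 0"
      using pm(1) by (auto simp: K_def zs_def ss_def)
    have ssmax: "s \<le> ss" if "p \<in> K" "snd p = s" for p s using pm(2)[OF that(1)] that(2) by (simp add: ss_def)
    define x where "x i = zs $ i + (if i = i0 then ss else 0) *\<^sub>R g" for i
    have xsum: "(\<Sum>i\<in>UNIV. x i) = 0"
    proof -
      have "(\<Sum>i\<in>UNIV. x i) = (\<Sum>i\<in>UNIV. zs $ i) + (\<Sum>i\<in>UNIV. (if i = i0 then ss else 0) *\<^sub>R g)"
        by (simp add: x_def sum.distrib)
      also have "(\<Sum>i\<in>UNIV. (if i = i0 then ss else 0) *\<^sub>R g) = ss *\<^sub>R g"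
        by (simp add: if_distrib[of "\<lambda>a. a *\<^sub>R g"] cong: if_cong)
      finally show ?thesis using zsum by simp
    qed
    have Dx: "ereal (if i = i0 then ss else 0) \<le> D i (x i)" for i
      unfolding D_def indiff_price_def
      by (rule SUP_upper) (use zsC[of i] in \<open>auto simp: x_def C_def\<close>)
    have sDx: "ereal ss \<le> (\<Sum>i\<in>UNIV. D i (x i))"
    proof -
      have "(\<Sum>i\<in>UNIV. ereal (if i = i0 then ss else 0)) \<le> (\<Sum>i\<in>UNIV. D i (x i))"
        by (rule sum_mono) (rule Dx)
      moreover have "(\<Sum>i\<in>UNIV. ereal (if i = i0 then ss else 0)) = ereal ss"
        by (simp add: sum_ereal)
      ultimately show ?thesis by simp
    qed
    show ?thesis
    proof (intro exI[of _ x] conjI allI impI xsum)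
      fix y :: "'i \<Rightarrow> real^'j"
      assume ysum: "(\<Sum>i\<in>UNIV. y i) = 0"
      show "(\<Sum>i\<in>UNIV. D i (y i)) \<le> (\<Sum>i\<in>UNIV. D i (x i))"
      proof (rule ccontr)
        assume "\<not> ?thesis"
        then have gt: "ereal ss < (\<Sum>i\<in>UNIV. D i (y i))" using sDx by auto
        have ninf: "(\<Sum>i\<in>UNIV. D i (y i)) \<noteq> \<infinity>" using nf ysum by blast
        have np: "D i (y i) \<noteq> \<infinity>" for i using ninf by (auto simp: sum_Pinfty)
        have nm: "D i (y i) \<noteq> -\<infinity>" for i
        proof
          assume "D i (y i) = -\<infinity>"
          then have "(\<Sum>i\<in>UNIV. D i (y i)) = -\<infinity>"
            by (intro sum_minf_ereal[of _ _ i]) (auto simp: np)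
          then show False using gt by simp
        qed
        define a where "a i = real_of_ereal (D i (y i))" for i
        have Da: "D i (y i) = ereal (a i)" for i using np[of i] nm[of i] unfolding a_def
          by (cases "D i (y i)") auto
        have "(\<Sum>i\<in>UNIV. D i (y i)) = ereal (\<Sum>i\<in>UNIV. a i)" by (simp add: Da)
        then have sa: "ss < (\<Sum>i\<in>UNIV. a i)" using gt by simp
        define del where "del = ((\<Sum>i\<in>UNIV. a i) - ss) / real CARD('i)"
        have del0: "del > 0" using sa by (simp add: del_def)
        have "\<exists>r. u i (x0 i) \<le> u i (x0 i + y i - r *\<^sub>R g) \<and> a i - del < r" for i
        proof -
          have "ereal (a i - del) < D i (y i)" using Da del0 by simp
          then show ?thesis unfolding D_def indiff_price_def less_SUP_iff by auto
        qed
        then obtain rr where rr: "\<And>i. u i (x0 i) \<le> u i (x0 i + y i - rr i *\<^sub>R g)"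
          "\<And>i. a i - del < rr i" by metis
        have "(\<Sum>i\<in>UNIV. a i - del) < (\<Sum>i\<in>UNIV. rr i)"
          by (rule sum_strict_mono) (auto simp: rr)
        moreover have "(\<Sum>i\<in>UNIV. a i - del) = ss"
          by (simp add: sum_subtractf del_def)
        ultimately have srr: "ss < (\<Sum>i\<in>UNIV. rr i)" by simp
        define p where "p = ((\<chi> i. y i - rr i *\<^sub>R g), (\<Sum>i\<in>UNIV. rr i))"
        have "p \<in> K"
        proof -
          have "(\<Sum>i\<in>UNIV. y i - rr i *\<^sub>R g) + (\<Sum>i\<in>UNIV. rr i) *\<^sub>R g = 0"
            using ysum by (simp add: sum_subtractf scaleR_sum_left)
          then show ?thesis using rr(1) srr ss0
            by (auto simp: K_def p_def C_def algebra_simps)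
        qed
        then have "(\<Sum>i\<in>UNIV. rr i) \<le> ss" using ssmax by (simp add: p_def)
        then show False using srr by simp
      qed
    qed
  qed
  then show ?thesis by (simp add: D_def)
qed

end
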